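(* Let $\pi$ be a propositional formula and $\varphi$ a formula of the basic modal language (built from $\top$, atoms, $\lnot$, $\land$, $\Box$). Then the formula $(\Box\pi\land\varphi)\to[\dagger\pi][!\pi]\varphi$ is true at every world of every transitive model.
   Context: Fix a countable non-empty set $\mathit{At}$ of atoms. A model is $\mathcal{M}=\langle W,R,V\rangle$, $W\neq\varnothing$, $R\subseteq W\times W$, $V:\mathit{At}\to\mathcal{P}(W)$, with standard Kripke semantics ($\mathcal{M},w\models\Box\psi$ iff $\psi$ holds at all $R$-successors of $w$); it is transitive if $R$ is transitive. A literal is an atom or its negation; a clause is a finite set $D$ of literals read as $\bigvee D$ ($\bigvee\varnothing:=\bot$), tautological if it contains $p$ and $\lnot p$ for some $p$. For propositional $\pi$, $\mathcal{C}(\pi)$ is the set of non-tautological clauses $D$ with $\models\pi\to\bigvee D$ and no $D'\subsetneq D$ with $\models\pi\to\bigvee D'$. For a model $\mathcal{M}$ and a non-tautological clause $D$, $\mathcal{M}^{(D)}_u=\langle W',R',V'\rangle$ has $W'=W\times\{0,1\}$, $(w,i)R'(v,j)$ iff $wRv$, $(w,0)\in V'(p)$ iff $w\in V(p)$, and $(w,1)\in V'(p)$ iff $\lnot p\in D$, or $\{p,\lnot p\}\cap D=\varnothing$ and $w\in V(p)$. Forgetting: $\mathcal{M},w\models[\dagger\pi]\psi$ iff for all $D\in\mathcal{C}(\pi)$, $\mathcal{M}^{(D)}_u,(w,0)\models\psi$. Public announcement: $\mathcal{M},w\models[!\pi]\psi$ iff ($\mathcal{M},w\models\pi$ implies $\mathcal{M}|_\pi,w\models\psi$),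 where $\mathcal{M}|_\pi$ is the restriction of $\mathcal{M}$ (domain, relation and valuation) to the set of worlds of $\mathcal{M}$ satisfying $\pi$. *)

theory Defs
  imports "HOL-Library.Countable"
begin

datatype 'a fm = Top | Atom 'a | Neg "'a fm" | Conj "'a fm" "'a fm" | Box "'a fm"

definition Impl :: "'a fm \<Rightarrow> 'a fm \<Rightarrow> 'a fm" where
  "Impl f g = Neg (Conj f (Neg g))"

fun is_prop :: "'a fm \<Rightarrow> bool" where
  "is_prop Top = True"
| "is_prop (Atom p) = True"
| "is_prop (Neg f) = is_prop f"
| "is_prop (Conj f g) = (is_prop f \<and> is_prop g)"
| "is_prop (Box f) = False"

record ('a, 'w) kmodel =
  W :: "'w set"
  R :: "('w \<times> 'w) set"
  V :: "'a \<Rightarrow> 'w set"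

definition is_model :: "('a, 'w) kmodel \<Rightarrow> bool" where
  "is_model M \<longleftrightarrow> W M \<noteq> {} \<and> R M \<subseteq> W M \<times> W M \<and> (\<forall>p. V M p \<subseteq> W M)"

definition transitive_model :: "('a, 'w) kmodel \<Rightarrow> bool" where
  "transitive_model M \<longleftrightarrow> is_model M \<and> trans (R M)"

fun sat :: "('a, 'w) kmodel \<Rightarrow> 'w \<Rightarrow> 'a fm \<Rightarrow> bool" where
  "sat M w Top = True"
| "sat M w (Atom p) = (w \<in> V M p)"
| "sat M w (Neg f) = (\<not> sat M w f)"
| "sat M w (Conj f g) = (sat M w f \<and> sat M w g)"
| "sat M w (Box f) = (\<forall>v. (w, v) \<in> R M \<longrightarrow> sat M v f)"

datatype 'a literal = Pos 'a | NegL 'a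

fun lit_val :: "('a \<Rightarrow> bool) \<Rightarrow> 'a literal \<Rightarrow> bool" where
  "lit_val v (Pos p) = v p"
| "lit_val v (NegL p) = (\<not> v p)"

text \<open>Classical propositional evaluation (only meaningful on propositional formulas).\<close>
fun pval :: "('a \<Rightarrow> bool) \<Rightarrow> 'a fm \<Rightarrow> bool" where
  "pval v Top = True"
| "pval v (Atom p) = v p"
| "pval v (Neg f) = (\<not> pval v f)"
| "pval v (Conj f g) = (pval v f \<and> pval v g)"
| "pval v (Box f) = undefined"

definition tautological :: "'a literal set \<Rightarrow> bool" where
  "tautological D \<longleftrightarrow> (\<exists>p. Pos p \<in> D \<and> NegL p \<in> D)"

definition entails_clause :: "'a fm \<Rightarrow> 'a literal set \<Rightarrow> bool" where
  "entails_clause \<pi> D \<longleftrightarrow> (\<forall>v. pval v \<pi> \<longrightarrow> (\<exists>l\<in>D. lit_val v l))"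

definition clauses :: "'a fm \<Rightarrow> 'a literal set set" where
  "clauses \<pi> = {D. finite D \<and> \<not> tautological D \<and> entails_clause \<pi> D \<and>
                    (\<forall>D'. D' \<subset> D \<longrightarrow> \<not> entails_clause \<pi> D')}"

text \<open>Copy 0 is False, copy 1 is True.\<close>
definition upd_model :: "('a, 'w) kmodel \<Rightarrow> 'a literal set \<Rightarrow> ('a, 'w \<times> bool) kmodel" where
  "upd_model M D = \<lparr> W = W M \<times> UNIV,
     R = {((w, i), (v, j)). (w, v) \<in> R M},
     V = (\<lambda>p. {(w, i). w \<in> W M \<and>
                 (if i then (NegL p \<in> D \<or> (Pos p \<notin> D \<and> NegL p \<notin> D \<and> w \<in> V M p))
                  else w \<in> V M p)}) \<rparr>"

definition restrict_model :: "('a, 'w) kmodel \<Rightarrow> 'a fm \<Rightarrow> ('a, 'w) kmodel" where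
  "restrict_model M \<pi> = (let S = {w \<in> W M. sat M w \<pi>} in
     \<lparr> W = S, R = R M \<inter> (S \<times> S), V = (\<lambda>p. V M p \<inter> S) \<rparr>)"

definition sat_announce :: "('a, 'w) kmodel \<Rightarrow> 'w \<Rightarrow> 'a fm \<Rightarrow> 'a fm \<Rightarrow> bool" where
  "sat_announce M w \<pi> \<phi> \<longleftrightarrow> (sat M w \<pi> \<longrightarrow> sat (restrict_model M \<pi>) w \<phi>)"

text \<open>M, w |= [dagger pi] psi, where the satisfaction of psi in the updated model is given by Q\<close>
definition sat_forget :: "('a, 'w) kmodel \<Rightarrow> 'w \<Rightarrow> 'a fm
      \<Rightarrow> (('a, 'w \<times> bool) kmodel \<Rightarrow> 'w \<times> bool \<Rightarrow> bool) \<Rightarrow> bool" where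
  "sat_forget M w \<pi> Q \<longleftrightarrow> (\<forall>D\<in>clauses \<pi>. Q (upd_model M D) (w, False))"

end

theory Submission
  imports Defs
begin

lemma sat_pval: "is_prop f \<Longrightarrow> sat M x f = pval (\<lambda>p. x \<in> V M p) f"
  by (induction f) auto

lemma copy0: "is_prop f \<Longrightarrow> u \<in> W M \<Longrightarrow> sat (upd_model M D) (u,False) f = sat M u f"
  by (induction f) (auto simp: upd_model_def)

lemma copy1:
  assumes "is_prop \<pi>" "D \<in> clauses \<pi>" "v \<in> W M"
  shows "\<not> sat (upd_model M D) (v,True) \<pi>"
proof
  assume s: "sat (upd_model M D) (v,True) \<pi>"
  let ?vv = "\<lambda>p. (v,True) \<in> V (upd_model M D) p"
  have "pval ?vv \<pi>" using s sat_pval[OF assms(1)] by metis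
  then obtain l where l: "l \<in> D" "lit_val ?vv l"
    using assms(2) unfolding clauses_def entails_clause_def by blast
  have nt: "\<not> tautological D" using assms(2) unfolding clauses_def by blast
  show False
  proof (cases l)
    case (Pos p)
    then show ?thesis using l nt unfolding tautological_def by (auto simp: upd_model_def)
  next
    case (NegL p)
    then show ?thesis using l assms(3) by (auto simp: upd_model_def)
  qed
qed

theorem proposition4:
  fixes M :: "('a::countable, 'w) kmodel" and \<pi> \<phi> :: "'a fm" and w :: 'w
  assumes "transitive_model M" and "w \<in> W M" and "is_prop \<pi>"
  shows "(sat M w (Box \<pi>) \<and> sat M w \<phi>) \<longrightarrow>
         sat_forget M w \<pi> (\<lambda>M' w'. sat_announce M' w' \<pi> \<phi>)"
proof (intro impI)
  assume h: "sat M w (Box \<pi>) \<and> sat M w \<phi>"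
  have tr: "trans (R M)" and RW: "R M \<subseteq> W M \<times> W M"
    using assms(1) unfolding transitive_model_def is_model_def by auto
  show "sat_forget M w \<pi> (\<lambda>M' w'. sat_announce M' w' \<pi> \<phi>)"
    unfolding sat_forget_def sat_announce_def
  proof (intro ballI impI)
    fix D assume D: "D \<in> clauses \<pi>"
    assume w0: "sat (upd_model M D) (w, False) \<pi>"
    let ?M' = "upd_model M D"
    let ?N = "restrict_model ?M' \<pi>"
    let ?S = "{x \<in> W ?M'. sat ?M' x \<pi>}"
    have WN: "W ?N = ?S" and RN: "R ?N = R ?M' \<inter> (?S \<times> ?S)"
      and VN: "\<And>p. V ?N p = V ?M' p \<inter> ?S"
      by (simp_all add: restrict_model_def Let_def)
    have inS: "(u, False) \<in> ?S" if "u = w \<or> (w,u) \<in> R M" for u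
    proof -
      have uW: "u \<in> W M" using that assms(2) RW by auto
      have "sat ?M' (u,False) \<pi>"
      proof (cases "u = w")
        case True then show ?thesis using w0 by simp
      next
        case False
        then have "(w,u) \<in> R M" using that by auto
        then have "sat M u \<pi>" using h by auto
        then show ?thesis using copy0[OF assms(3) uW] by simp
      qed
      then show ?thesis using uW by (simp add: upd_model_def)
    qed
    have key: "\<And>u. u = w \<or> (w,u) \<in> R M \<Longrightarrow> sat ?N (u,False) f = sat M u f" for f
    proof (induction f)
      case (Atom p)
      have "(u,False) \<in> ?S" using inS[OF Atom] .
      moreover have "u \<in> W M" using Atom assms(2) RW by auto
      ultimately show ?case unfolding sat.simps VN by (auto simp: upd_model_def)
    next
      case (Box f)
      have reach: "(w,v) \<in> R M" if "(u,v) \<in> R M" for v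
        using Box.prems that tr by (meson transD)
      show ?case
      proof
        assume a: "sat ?N (u,False) (Box f)"
        show "sat M u (Box f)"
        proof (simp, intro allI impI)
          fix v assume uv: "(u,v) \<in> R M"
          have "((u,False),(v,False)) \<in> R ?N"
            unfolding RN using inS[OF Box.prems] inS[of v] reach[OF uv] uv
            by (simp add: upd_model_def)
          then have "sat ?N (v,False) f" using a by simp
          then show "sat M v f" using Box.IH reach[OF uv] by blast
        qed
      next
        assume a: "sat M u (Box f)"
        show "sat ?N (u,False) (Box f)"
        proof (simp, intro allI impI)
          fix v j assume e: "((u,False),(v,j)) \<in> R ?N"
          then have uv: "(u,v) \<in> R M" and vS: "(v,j) \<in> ?S"
            unfolding RN by (auto simp: upd_model_def)
          have vW: "v \<in> W M" using uv RW by auto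
          have "j = False"
          proof (rule ccontr)
            assume "j \<noteq> False"
            then have "j = True" by simp
            then show False using vS copy1[OF assms(3) D vW] by simp
          qed
          then show "sat ?N (v,j) f" using Box.IH reach[OF uv] a uv by auto
        qed
      qed
    qed auto
    show "sat ?N (w,False) \<phi>" using key[of w \<phi>] h by simp
  qed
qed

end
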